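(* There exists a universal constant $\alpha>0$ such that for every integer $n\ge1$ \[ \mathbf{T}^\varepsilon_n\ge\alpha\,\varepsilon^2\sum_{i=0}^n\Big(\frac{\partial u_1}{\partial x_2}\Big(2+\frac in,1\Big)\Big)^2+o(\varepsilon^2),\qquad\text{as }\varepsilon\searrow0. \]
   Context: Hersch's pipe is $\mathbf{H}=\{(x_1,x_2):x_1^2+x_2^2<1,\ x_1<0\}\cup\{(x_1,x_2):0<|x_2|<1,\ x_1\ge0\}\subseteq\mathbb{R}^2$; $u_1\in W^{1,2}_0(\mathbf{H})$ is its positive, $L^2$-normalized first Dirichlet eigenfunction (it exists, is $C^2$ up to the flat boundary piece $(0,\infty)\times\{1\}$, and $\partial u_1/\partial x_2$ has a continuous trace there). For $n\ge1$, $0<\varepsilon<1/(2n)$ and $i=0,\dots,n$: $\Sigma^\varepsilon_i=(2+\tfrac in-\varepsilon,2+\tfrac in+\varepsilon)$, $T^\varepsilon_i=\Sigma^\varepsilon_i\times[1,2)$, $\Gamma^\varepsilon_n=\bigcup_{i=0}^n(\Sigma^\varepsilon_i\times\{1\})$, $\mathbf{H}^\varepsilon_n=\mathbf{H}\cup\bigcup_{i=0}^nT^\varepsilon_i$, and \[ \mathbf{T}^\varepsilon_n=\sup_{\varphi\in C^\infty_0(\mathbf{H}^\varepsilon_n)}\Big\{2\int_{\Gamma^\varepsilon_n}\frac{\partial u_1}{\partial x_2}\varphi\,d\mathcal{H}^1-\int_{\mathbf{H}^\varepsilon_n}|\nabla\varphi|^2dx\Big\}. \] *)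

theory Defs
  imports "HOL-Analysis.Analysis"
begin

type_synonym pt = "real \<times> real"

definition hersch :: "pt set" where
  "hersch = {(x1, x2). x1\<^sup>2 + x2\<^sup>2 < 1 \<and> x1 < 0} \<union> {(x1, x2). 0 < \<bar>x2\<bar> \<and> \<bar>x2\<bar> < 1 \<and> x1 \<ge> 0}"

definition dpart :: "bool \<Rightarrow> (pt \<Rightarrow> real) \<Rightarrow> pt \<Rightarrow> real" where
  "dpart k f p = (if k then deriv (\<lambda>t. f (fst p, t)) (snd p) else deriv (\<lambda>t. f (t, snd p)) (fst p))"

definition iter_dpart :: "bool list \<Rightarrow> (pt \<Rightarrow> real) \<Rightarrow> pt \<Rightarrow> real" where
  "iter_dpart ks f = foldr dpart ks f"

definition smooth :: "(pt \<Rightarrow> real) \<Rightarrow> bool" where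
  "smooth f \<longleftrightarrow> (\<forall>ks x. iter_dpart ks f differentiable (at x))"

definition test_fn :: "pt set \<Rightarrow> (pt \<Rightarrow> real) \<Rightarrow> bool" where
  "test_fn U f \<longleftrightarrow> smooth f \<and> compact (closure {x. f x \<noteq> 0}) \<and> closure {x. f x \<noteq> 0} \<subseteq> U"

definition grad_sq :: "(pt \<Rightarrow> real) \<Rightarrow> pt \<Rightarrow> real" where
  "grad_sq f x = (dpart False f x)\<^sup>2 + (dpart True f x)\<^sup>2"

text \<open>W^{1,2}_0(U): u (with gradient (w1,w2) in L^2) is the H^1-limit of test functions.\<close>
definition sob0 :: "pt set \<Rightarrow> (pt \<Rightarrow> real) \<Rightarrow> (pt \<Rightarrow> real) \<Rightarrow> (pt \<Rightarrow> real) \<Rightarrow> bool" where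
  "sob0 U u w1 w2 \<longleftrightarrow>
     set_integrable lebesgue U (\<lambda>x. (u x)\<^sup>2) \<and>
     set_integrable lebesgue U (\<lambda>x. (w1 x)\<^sup>2) \<and>
     set_integrable lebesgue U (\<lambda>x. (w2 x)\<^sup>2) \<and>
     (\<exists>\<phi>. (\<forall>k. test_fn U (\<phi> k)) \<and>
        (\<forall>k. set_integrable lebesgue U (\<lambda>x. (u x - \<phi> k x)\<^sup>2 + (w1 x - dpart False (\<phi> k) x)\<^sup>2
                                            + (w2 x - dpart True (\<phi> k) x)\<^sup>2)) \<and>
        (\<lambda>k. LINT x:U|lebesgue. (u x - \<phi> k x)\<^sup>2 + (w1 x - dpart False (\<phi> k) x)\<^sup>2
                                + (w2 x - dpart True (\<phi> k) x)\<^sup>2) \<longlonglongrightarrow> 0)"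

definition lambda1 :: "pt set \<Rightarrow> real" where
  "lambda1 U = Inf {(LINT x:U|lebesgue. (w1 x)\<^sup>2 + (w2 x)\<^sup>2) / (LINT x:U|lebesgue. (v x)\<^sup>2) | v w1 w2.
                     sob0 U v w1 w2 \<and> (LINT x:U|lebesgue. (v x)\<^sup>2) \<noteq> 0}"

definition first_dirichlet_efun :: "pt set \<Rightarrow> (pt \<Rightarrow> real) \<Rightarrow> (pt \<Rightarrow> real) \<Rightarrow> (pt \<Rightarrow> real) \<Rightarrow> bool" where
  "first_dirichlet_efun U u w1 w2 \<longleftrightarrow>
     sob0 U u w1 w2 \<and> (\<forall>x\<in>U. u x > 0) \<and> (LINT x:U|lebesgue. (u x)\<^sup>2) = 1 \<and>
     (\<forall>\<phi>. test_fn U \<phi> \<longrightarrow>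
        (LINT x:U|lebesgue. w1 x * dpart False \<phi> x + w2 x * dpart True \<phi> x)
          = lambda1 U * (LINT x:U|lebesgue. u x * \<phi> x))"

definition Sig :: "nat \<Rightarrow> real \<Rightarrow> nat \<Rightarrow> real set" where
  "Sig n \<epsilon> i = {2 + real i / real n - \<epsilon> <..< 2 + real i / real n + \<epsilon>}"

definition Tube :: "nat \<Rightarrow> real \<Rightarrow> nat \<Rightarrow> pt set" where
  "Tube n \<epsilon> i = Sig n \<epsilon> i \<times> {1..<2}"

definition Hext :: "nat \<Rightarrow> real \<Rightarrow> pt set" where
  "Hext n \<epsilon> = hersch \<union> (\<Union>i\<in>{0..n}. Tube n \<epsilon> i)"

text \<open>The functional; the integral over Gamma (w.r.t. H^1) is the sum of the integrals over the
  disjoint segments Sig i \<times> {1}; g is the trace of du/dx2 on the line x2 = 1.\<close>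
definition Tfun :: "(real \<Rightarrow> real) \<Rightarrow> nat \<Rightarrow> real \<Rightarrow> ereal" where
  "Tfun g n \<epsilon> = (SUP \<phi>\<in>{\<phi>. test_fn (Hext n \<epsilon>) \<phi>}.
      ereal (2 * (\<Sum>i=0..n. integral (Sig n \<epsilon> i) (\<lambda>t. g t * \<phi> (t, 1)))
             - integral (Hext n \<epsilon>) (grad_sq \<phi>)))"

end

theory Submission
  imports Defs "HOL-Computational_Algebra.Polynomial"
begin


definition H :: "real poly \<Rightarrow> real \<Rightarrow> real" where
  "H p t = (if t > 0 then poly p (1/t) * exp (-1/t) else 0)"

definition Dp :: "real poly \<Rightarrow> real poly" where
  "Dp p = [:0,0,1:] * (p - pderiv p)"

lemma poly_exp_at_top: "((\<lambda>x::real. poly q x * exp (-x)) \<longlongrightarrow> 0) at_top"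
proof -
  have e: "(\<lambda>x. poly q x * exp (-x)) = (\<lambda>x. \<Sum>i\<le>degree q. coeff q i * (x ^ i / exp x))"
    by (auto simp: poly_altdef sum_divide_distrib exp_minus divide_inverse[symmetric])
  show ?thesis unfolding e
  proof (rule tendsto_null_sum)
    fix i show "((\<lambda>x::real. coeff q i * (x ^ i / exp x)) \<longlongrightarrow> 0) at_top"
      using tendsto_mult_right_zero[OF tendsto_power_div_exp_0[of i], of "coeff q i"] by simp
  qed
qed

lemma poly_inv_exp_at_right: "((\<lambda>y::real. poly q (1/y) * exp (-1/y)) \<longlongrightarrow> 0) (at_right 0)"
proof -
  have "((\<lambda>y. poly q (inverse y) * exp (- inverse y)) \<longlongrightarrow> 0) (at_right 0)"
    using filterlim_compose[OF poly_exp_at_top[of q] filterlim_inverse_at_top_right] by (simp add: o_def)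
  then show ?thesis by (simp add: divide_inverse)
qed

lemma H_deriv_pos:
  assumes True: "t > 0"
  shows "(H p has_real_derivative H (Dp p) t) (at t)"
proof -
  have g: "((\<lambda>y::real. 1/y) has_real_derivative -1/t^2) (at t)"
    using True DERIV_inverse[of t] by (simp add: inverse_eq_divide power2_eq_square)
  have d1: "((\<lambda>y. poly p (1/y)) has_real_derivative poly (pderiv p) (1/t) * (-1/t^2)) (at t)"
    using DERIV_chain2[OF poly_DERIV[of p "1/t"] g] .
  have g2: "((\<lambda>y::real. -1/y) has_real_derivative 1/t^2) (at t)"
    using DERIV_minus[OF g] by simp
  have d2: "((\<lambda>y. exp (-1/y)) has_real_derivative exp (-1/t) * (1/t^2)) (at t)"
    using DERIV_chain2[OF DERIV_exp g2] .
  have d: "((\<lambda>y. poly p (1/y) * exp (-1/y)) has_real_derivative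
         poly p (1/t) * (exp (-1/t) * (1/t^2)) + (poly (pderiv p) (1/t) * (-1/t^2)) * exp (-1/t)) (at t)"
    using DERIV_mult'[OF d1 d2] .
  have e: "poly p (1/t) * (exp (-1/t) * (1/t^2)) + (poly (pderiv p) (1/t) * (-1/t^2)) * exp (-1/t) = H (Dp p) t"
    using True by (simp add: H_def Dp_def power2_eq_square algebra_simps)
  have ev: "\<forall>\<^sub>F y in nhds t. poly p (1/y) * exp (-1/y) = H p y"
    using eventually_nhds_in_open[of "{0<..}" t] True by (auto simp: H_def elim!: eventually_mono)
  show ?thesis
    using DERIV_cong_ev[OF refl ev refl] d e by simp
qed

lemma H_deriv: "(H p has_real_derivative H (Dp p) t) (at t)"
proof (cases "t > 0")
  case True
  then show ?thesis by (rule H_deriv_pos)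
next
  case False
  show ?thesis
  proof (cases "t < 0")
    case True
    have ev: "\<forall>\<^sub>F y in nhds t. 0 = H p y"
      using True eventually_nhds_in_open[of "{..<0}" t] by (auto simp: H_def elim!: eventually_mono)
    have "H (Dp p) t = 0" using False by (simp add: H_def)
    then show ?thesis using DERIV_cong_ev[OF refl ev refl] DERIV_const[of "0::real" "at t"] by simp
  next
    case False2: False
    with False have t0: "t = 0" by simp
    have "((\<lambda>y. (H p y - H p 0) / (y - 0)) \<longlongrightarrow> 0) (at 0)"
    proof (rule filterlim_split_at)
      show "((\<lambda>y. (H p y - H p 0) / (y - 0)) \<longlongrightarrow> 0) (at_left 0)"
        by (rule tendsto_eventually) (auto simp: H_def eventually_at_left_field intro: exI[of _ "-1"])
      have "((\<lambda>y. poly (pCons 0 p) (1/y) * exp (-1/y)) \<longlongrightarrow> 0) (at_right 0)"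
        by (rule poly_inv_exp_at_right)
      then show "((\<lambda>y. (H p y - H p 0) / (y - 0)) \<longlongrightarrow> 0) (at_right 0)"
        by (rule Lim_transform_eventually) (auto simp: H_def eventually_at_right_field intro!: exI[of _ 1])
    qed
    then show ?thesis using t0 by (simp add: has_field_derivative_iff H_def)
  qed
qed

lemma H_smult: "H (smult c p) t = c * H p t"
  by (simp add: H_def)

lemma H_aff_deriv: "((\<lambda>t. H p (c * t + d)) has_real_derivative H (smult c (Dp p)) (c * a + d)) (at a)"
proof -
  have "((\<lambda>t. c * t + d) has_real_derivative c) (at a)"
    by (auto intro!: derivative_eq_intros)
  from DERIV_chain2[OF H_deriv this] show ?thesis by (simp add: H_smult mult.commute)
qed

lemma H_differentiable: "H p differentiable (at t)"
  using H_deriv real_differentiable_def by blast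

lemma H_cont: "isCont (H p) t"
  using H_deriv DERIV_isCont by blast

inductive_set Q :: "(real \<times> real \<Rightarrow> real) set" where
  Qc: "(\<lambda>_. c) \<in> Q"
| Q1: "(\<lambda>x. H p (c * fst x + d)) \<in> Q"
| Q2: "(\<lambda>x. H p (c * snd x + d)) \<in> Q"
| Qadd: "f \<in> Q \<Longrightarrow> g \<in> Q \<Longrightarrow> (\<lambda>x. f x + g x) \<in> Q"
| Qmul: "f \<in> Q \<Longrightarrow> g \<in> Q \<Longrightarrow> (\<lambda>x. f x * g x) \<in> Q"

lemma Q_diff1:
  "(\<lambda>x::real\<times>real. H p (c * fst x + d)) differentiable (at z)"
proof -
  have "((\<lambda>x::real\<times>real. c * fst x + d) has_derivative (\<lambda>h. c * fst h)) (at z)"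
    by (auto intro!: derivative_eq_intros)
  then have "(\<lambda>x::real\<times>real. c * fst x + d) differentiable (at z)"
    by (rule differentiableI)
  from differentiable_chain_at[OF this H_differentiable] show ?thesis by (simp add: o_def)
qed

lemma Q_diff2:
  "(\<lambda>x::real\<times>real. H p (c * snd x + d)) differentiable (at z)"
proof -
  have "((\<lambda>x::real\<times>real. c * snd x + d) has_derivative (\<lambda>h. c * snd h)) (at z)"
    by (auto intro!: derivative_eq_intros)
  then have "(\<lambda>x::real\<times>real. c * snd x + d) differentiable (at z)"
    by (rule differentiableI)
  from differentiable_chain_at[OF this H_differentiable] show ?thesis by (simp add: o_def)
qed

lemma Q_prop:
  assumes "f \<in> Q"
  shows "(\<forall>z. f differentiable (at z)) \<and>
    (\<exists>f1\<in>Q. \<forall>a b. ((\<lambda>t. f (t, b)) has_real_derivative f1 (a, b)) (at a)) \<and>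
    (\<exists>f2\<in>Q. \<forall>a b. ((\<lambda>t. f (a, t)) has_real_derivative f2 (a, b)) (at b))"
  using assms
proof induction
  case (Qc c)
  show ?case using Q.Qc[of 0] by (auto intro!: bexI[of _ "\<lambda>_. 0"] simp: DERIV_const)
next
  case (Q1 p c d)
  show ?case
  proof (intro conjI)
    show "\<forall>z. (\<lambda>x::real\<times>real. H p (c * fst x + d)) differentiable (at z)" by (intro allI Q_diff1)
    show "\<exists>f1\<in>Q. \<forall>a b. ((\<lambda>t. H p (c * fst (t, b) + d)) has_real_derivative f1 (a, b)) (at a)"
      using Q.Q1[of "smult c (Dp p)" c d] H_aff_deriv[of p c d] by (intro bexI[of _ "\<lambda>x. H (smult c (Dp p)) (c * fst x + d)"]) auto
    show "\<exists>f2\<in>Q. \<forall>a b. ((\<lambda>t. H p (c * fst (a, t) + d)) has_real_derivative f2 (a, b)) (at b)"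
      using Q.Qc[of 0] by (intro bexI[of _ "\<lambda>_. 0"]) auto
  qed
next
  case (Q2 p c d)
  show ?case
  proof (intro conjI)
    show "\<forall>z. (\<lambda>x::real\<times>real. H p (c * snd x + d)) differentiable (at z)" by (intro allI Q_diff2)
    show "\<exists>f1\<in>Q. \<forall>a b. ((\<lambda>t. H p (c * snd (t, b) + d)) has_real_derivative f1 (a, b)) (at a)"
      using Q.Qc[of 0] by (intro bexI[of _ "\<lambda>_. 0"]) auto
    show "\<exists>f2\<in>Q. \<forall>a b. ((\<lambda>t. H p (c * snd (a, t) + d)) has_real_derivative f2 (a, b)) (at b)"
      using Q.Q2[of "smult c (Dp p)" c d] H_aff_deriv[of p c d] by (intro bexI[of _ "\<lambda>x. H (smult c (Dp p)) (c * snd x + d)"]) auto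
  qed
next
  case (Qadd f g)
  then obtain f1 f2 g1 g2 where
    "f1 \<in> Q" "f2 \<in> Q" "g1 \<in> Q" "g2 \<in> Q"
    "\<forall>a b. ((\<lambda>t. f (t, b)) has_real_derivative f1 (a, b)) (at a)"
    "\<forall>a b. ((\<lambda>t. f (a, t)) has_real_derivative f2 (a, b)) (at b)"
    "\<forall>a b. ((\<lambda>t. g (t, b)) has_real_derivative g1 (a, b)) (at a)"
    "\<forall>a b. ((\<lambda>t. g (a, t)) has_real_derivative g2 (a, b)) (at b)"
    by blast
  note h = this
  show ?case
  proof (intro conjI)
    show "\<forall>z. (\<lambda>x. f x + g x) differentiable (at z)"
      using Qadd.IH by (intro allI differentiable_add) auto
    show "\<exists>f1\<in>Q. \<forall>a b. ((\<lambda>t. f (t, b) + g (t, b)) has_real_derivative f1 (a, b)) (at a)"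
      using h Qadd.hyps by (intro bexI[of _ "\<lambda>x. f1 x + g1 x"] allI DERIV_add) (auto intro!: Q.Qadd)
    show "\<exists>f2\<in>Q. \<forall>a b. ((\<lambda>t. f (a, t) + g (a, t)) has_real_derivative f2 (a, b)) (at b)"
      using h Qadd.hyps by (intro bexI[of _ "\<lambda>x. f2 x + g2 x"] allI DERIV_add) (auto intro!: Q.Qadd)
  qed
next
  case (Qmul f g)
  then obtain f1 f2 g1 g2 where
    "f1 \<in> Q" "f2 \<in> Q" "g1 \<in> Q" "g2 \<in> Q"
    "\<forall>a b. ((\<lambda>t. f (t, b)) has_real_derivative f1 (a, b)) (at a)"
    "\<forall>a b. ((\<lambda>t. f (a, t)) has_real_derivative f2 (a, b)) (at b)"
    "\<forall>a b. ((\<lambda>t. g (t, b)) has_real_derivative g1 (a, b)) (at a)"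
    "\<forall>a b. ((\<lambda>t. g (a, t)) has_real_derivative g2 (a, b)) (at b)"
    by blast
  note h = this
  show ?case
  proof (intro conjI)
    show "\<forall>z. (\<lambda>x. f x * g x) differentiable (at z)"
      using Qmul.IH by (intro allI differentiable_mult) auto
    show "\<exists>f1\<in>Q. \<forall>a b. ((\<lambda>t. f (t, b) * g (t, b)) has_real_derivative f1 (a, b)) (at a)"
      using h Qmul.hyps by (intro bexI[of _ "\<lambda>x. f x * g1 x + f1 x * g x"] allI DERIV_mult') (auto intro!: Q.Qadd Q.Qmul)
    show "\<exists>f2\<in>Q. \<forall>a b. ((\<lambda>t. f (a, t) * g (a, t)) has_real_derivative f2 (a, b)) (at b)"
      using h Qmul.hyps by (intro bexI[of _ "\<lambda>x. f x * g2 x + f2 x * g x"] allI DERIV_mult') (auto intro!: Q.Qadd Q.Qmul)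
  qed
qed

lemma dpart_Q: "f \<in> Q \<Longrightarrow> dpart k f \<in> Q"
proof -
  assume f: "f \<in> Q"
  from Q_prop[OF f] obtain f1 f2 where
    "f1 \<in> Q" "f2 \<in> Q"
    "\<forall>a b. ((\<lambda>t. f (t, b)) has_real_derivative f1 (a, b)) (at a)"
    "\<forall>a b. ((\<lambda>t. f (a, t)) has_real_derivative f2 (a, b)) (at b)"
    by blast
  then have "dpart False f = f1" "dpart True f = f2"
    by (auto simp: dpart_def fun_eq_iff intro!: DERIV_imp_deriv)
  then show ?thesis using \<open>f1 \<in> Q\<close> \<open>f2 \<in> Q\<close> by (cases k) auto
qed

lemma smooth_Q: "f \<in> Q \<Longrightarrow> smooth f"
proof -
  assume f: "f \<in> Q"
  have "iter_dpart ks f \<in> Q" for ks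
    by (induction ks) (auto simp: iter_dpart_def f dpart_Q)
  then show ?thesis using Q_prop unfolding smooth_def by blast
qed

definition hb :: "real \<Rightarrow> real" where
  "hb t = H 1 (1/4 + t) * H 1 (1/4 - t)"
definition hbd :: "real \<Rightarrow> real" where
  "hbd t = H (Dp 1) (1/4 + t) * H 1 (1/4 - t) - H 1 (1/4 + t) * H (Dp 1) (1/4 - t)"

lemma hb_deriv: "(hb has_real_derivative hbd t) (at t)"
proof -
  have a: "((\<lambda>t. H 1 (1 * t + 1/4)) has_real_derivative H (smult 1 (Dp 1)) (1 * t + 1/4)) (at t)"
    by (rule H_aff_deriv)
  have b: "((\<lambda>t. H 1 ((-1) * t + 1/4)) has_real_derivative H (smult (-1) (Dp 1)) ((-1) * t + 1/4)) (at t)"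
    by (rule H_aff_deriv)
  from DERIV_mult'[OF a b] show ?thesis
    unfolding hb_def hbd_def H_smult by (simp add: algebra_simps)
qed

lemma H_nonpos: "s \<le> 0 \<Longrightarrow> H p s = 0"
  by (simp add: H_def)

lemma hb_zero: "\<bar>t\<bar> \<ge> 1/4 \<Longrightarrow> hb t = 0 \<and> hbd t = 0"
  by (cases "t \<ge> 0") (auto simp: hb_def hbd_def H_nonpos)

lemma H1_nonneg: "H 1 s \<ge> 0"
  by (simp add: H_def)

lemma hb_nonneg: "hb t \<ge> 0"
  by (simp add: hb_def H1_nonneg)

lemma hb_lower: "\<bar>t\<bar> \<le> 1/8 \<Longrightarrow> hb t \<ge> exp (-16)"
proof -
  assume t: "\<bar>t\<bar> \<le> 1/8"
  have l: "H 1 s \<ge> exp (-8)" if "s \<ge> 1/8" for s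
  proof -
    have "1/s \<le> 8" using that by (simp add: divide_le_eq)
    then have "exp (-8) \<le> exp (-1/s)" by simp
    then show ?thesis using that by (simp add: H_def)
  qed
  have "exp (-8) * exp (-8) \<le> H 1 (1/4 + t) * H 1 (1/4 - t)"
    using t by (intro mult_mono l) (auto simp: H1_nonneg)
  then show ?thesis by (simp add: hb_def mult_exp_exp)
qed

lemma hb0: "hb 0 = exp (-8)"
  by (simp add: hb_def H_def mult_exp_exp)

lemma hb_cont: "continuous_on S hb"
  using hb_deriv by (meson DERIV_isCont continuous_at_imp_continuous_on)

lemma hbd_cont: "continuous_on S hbd"
proof -
  have "continuous_on S (\<lambda>t. H (Dp 1) (1/4 + t) * H 1 (1/4 - t) - H 1 (1/4 + t) * H (Dp 1) (1/4 - t))"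
    by (intro continuous_intros continuous_on_compose2[OF continuous_at_imp_continuous_on[OF ballI[OF H_cont]]]) auto
  then show ?thesis unfolding hbd_def[abs_def] .
qed

lemma hb_bound: "\<exists>M>0. \<forall>t. \<bar>hb t\<bar> \<le> M \<and> \<bar>hbd t\<bar> \<le> M"
proof -
  have "compact ((\<lambda>t. \<bar>hb t\<bar> + \<bar>hbd t\<bar>) ` {-1/4..1/4})"
    by (intro compact_continuous_image continuous_intros hb_cont hbd_cont) auto
  then obtain B where B: "\<forall>y\<in>(\<lambda>t. \<bar>hb t\<bar> + \<bar>hbd t\<bar>) ` {-1/4..1/4}. norm y \<le> B"
    using compact_imp_bounded bounded_iff by metis
  have bnd: "\<bar>hb t\<bar> \<le> max B 1 \<and> \<bar>hbd t\<bar> \<le> max B 1" for t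
  proof (cases "\<bar>t\<bar> \<ge> 1/4")
    case True then show ?thesis using hb_zero by auto
  next
    case False
    then have "t \<in> {-1/4..1/4}" by auto
    then have "\<bar>\<bar>hb t\<bar> + \<bar>hbd t\<bar>\<bar> \<le> B" using B by auto
    then show ?thesis by auto
  qed
  show ?thesis by (rule exI[of _ "max B 1"]) (use bnd in auto)
qed

lemma Q_sum: "finite A \<Longrightarrow> (\<forall>i\<in>A. f i \<in> Q) \<Longrightarrow> (\<lambda>x. \<Sum>i\<in>A. f i x) \<in> Q"
proof (induction A rule: finite_induct)
  case empty then show ?case using Q.Qc[of 0] by simp
next
  case (insert a A) then show ?case using Q.Qadd[of "f a" "\<lambda>x. \<Sum>i\<in>A. f i x"] by simp
qed

lemma hb_fst_Q: "(\<lambda>x. hb ((fst x - c) / e)) \<in> Q"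
proof -
  have q: "(\<lambda>x. H 1 ((1/e) * fst x + (1/4 - c/e)) * H 1 ((-1/e) * fst x + (1/4 + c/e))) \<in> Q"
    by (intro Q.Qmul Q.Q1)
  have eq: "(\<lambda>x. hb ((fst x - c) / e)) = (\<lambda>x. H 1 ((1/e) * fst x + (1/4 - c/e)) * H 1 ((-1/e) * fst x + (1/4 + c/e)))"
    by (auto simp: hb_def fun_eq_iff diff_divide_distrib algebra_simps)
  show ?thesis unfolding eq by (rule q)
qed

lemma hb_snd_Q: "(\<lambda>x. hb ((snd x - c) / e)) \<in> Q"
proof -
  have q: "(\<lambda>x. H 1 ((1/e) * snd x + (1/4 - c/e)) * H 1 ((-1/e) * snd x + (1/4 + c/e))) \<in> Q"
    by (intro Q.Qmul Q.Q2)
  have eq: "(\<lambda>x. hb ((snd x - c) / e)) = (\<lambda>x. H 1 ((1/e) * snd x + (1/4 - c/e)) * H 1 ((-1/e) * snd x + (1/4 + c/e)))"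
    by (auto simp: hb_def fun_eq_iff diff_divide_distrib algebra_simps)
  show ?thesis unfolding eq by (rule q)
qed

definition cc :: "nat \<Rightarrow> nat \<Rightarrow> real" where "cc n i = 2 + real i / real n"

definition phi :: "(real \<Rightarrow> real) \<Rightarrow> nat \<Rightarrow> real \<Rightarrow> real \<Rightarrow> real \<times> real \<Rightarrow> real" where
  "phi g n e b x = (\<Sum>i=0..n. b * e * g (cc n i) * hb ((fst x - cc n i) / e) * hb ((snd x - 1) / e))"

lemma phi_Q: "phi g n e b \<in> Q"
  unfolding phi_def[abs_def]
  by (intro Q_sum ballI Q.Qmul Q.Qc hb_fst_Q hb_snd_Q) auto

lemma hb_aff_deriv: "((\<lambda>t. hb ((t - c) / e)) has_real_derivative hbd ((a - c) / e) * (1/e)) (at a)"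
proof -
  have "((\<lambda>t. (t - c) / e) has_real_derivative 1/e) (at a)"
    by (cases "e = 0") (auto intro!: derivative_eq_intros)
  from DERIV_chain2[OF hb_deriv this] show ?thesis .
qed

lemma dpart_phi1: "dpart False (phi g n e b) x =
   (\<Sum>i=0..n. b * e * g (cc n i) * (hbd ((fst x - cc n i) / e) * (1/e)) * hb ((snd x - 1) / e))"
proof -
  have "((\<lambda>t. phi g n e b (t, snd x)) has_real_derivative
     (\<Sum>i=0..n. b * e * g (cc n i) * (hbd ((fst x - cc n i) / e) * (1/e)) * hb ((snd x - 1) / e))) (at (fst x))"
    unfolding phi_def fst_conv snd_conv
    by (intro DERIV_sum DERIV_cmult DERIV_cmult_right hb_aff_deriv)
  then show ?thesis unfolding dpart_def by (simp add: DERIV_imp_deriv)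
qed

lemma dpart_phi2: "dpart True (phi g n e b) x =
   (\<Sum>i=0..n. b * e * g (cc n i) * hb ((fst x - cc n i) / e) * (hbd ((snd x - 1) / e) * (1/e)))"
proof -
  have "((\<lambda>t. phi g n e b (fst x, t)) has_real_derivative
     (\<Sum>i=0..n. b * e * g (cc n i) * hb ((fst x - cc n i) / e) * (hbd ((snd x - 1) / e) * (1/e)))) (at (snd x))"
    unfolding phi_def fst_conv snd_conv
    by (intro DERIV_sum DERIV_cmult hb_aff_deriv)
  then show ?thesis unfolding dpart_def by (simp add: DERIV_imp_deriv)
qed

definition bx :: "nat \<Rightarrow> real \<Rightarrow> nat \<Rightarrow> (real \<times> real) set" where
  "bx n e i = cbox (cc n i - e/4, 1 - e/4) (cc n i + e/4, 1 + e/4)"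

lemma mem_box: "x \<in> bx n e i \<longleftrightarrow> \<bar>fst x - cc n i\<bar> \<le> e/4 \<and> \<bar>snd x - 1\<bar> \<le> e/4"
proof (cases x)
  case (Pair a b)
  have "x \<in> bx n e i \<longleftrightarrow> cc n i - e/4 \<le> a \<and> a \<le> cc n i + e/4 \<and> 1 - e/4 \<le> b \<and> b \<le> 1 + e/4"
    using Pair by (auto simp: bx_def cbox_Pair_iff)
  then show ?thesis using Pair by (smt (verit) fst_conv snd_conv)
qed

lemma out_box: "e > 0 \<Longrightarrow> x \<notin> bx n e i \<Longrightarrow> \<bar>(fst x - cc n i) / e\<bar> \<ge> 1/4 \<or> \<bar>(snd x - 1) / e\<bar> \<ge> 1/4"
  by (auto simp: mem_box abs_divide le_divide_eq)

lemma cc_sep: "n \<ge> 1 \<Longrightarrow> i \<noteq> j \<Longrightarrow> \<bar>cc n i - cc n j\<bar> \<ge> 1 / real n"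
proof -
  assume n: "n \<ge> 1" and ij: "i \<noteq> j"
  have "\<bar>real i - real j\<bar> \<ge> 1" using ij by linarith
  then have "\<bar>real i - real j\<bar> / real n \<ge> 1 / real n"
    using n by (intro divide_right_mono) auto
  moreover have "cc n i - cc n j = (real i - real j) / real n"
    by (simp add: cc_def diff_divide_distrib)
  ultimately show ?thesis by (simp add: abs_divide)
qed

lemma box_disj:
  assumes "n \<ge> 1" "e > 0" "e < 1 / (2 * real n)" "i \<noteq> j" "x \<in> bx n e i"
  shows "x \<notin> bx n e j"
proof
  assume "x \<in> bx n e j"
  with assms(5) have "\<bar>fst x - cc n i\<bar> \<le> e/4" "\<bar>fst x - cc n j\<bar> \<le> e/4" by (auto simp: mem_box)
  then have "\<bar>cc n i - cc n j\<bar> \<le> e/2" by arith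
  moreover have "\<bar>cc n i - cc n j\<bar> \<ge> 1 / real n" using cc_sep assms by blast
  moreover have "e / 2 < 1 / real n" using assms(1,3) by (simp add: field_simps)
  ultimately show False by linarith
qed

lemma box_sub:
  assumes "e > 0" "e < 1" "i \<le> n"
  shows "bx n e i \<subseteq> Hext n e"
proof
  fix x assume x: "x \<in> bx n e i"
  obtain x1 x2 where xx: "x = (x1, x2)" by (cases x)
  have c2: "cc n i \<ge> 2" by (simp add: cc_def)
  have h0: "\<bar>x1 - cc n i\<bar> \<le> e/4" "\<bar>x2 - 1\<bar> \<le> e/4" using x xx by (auto simp: mem_box)
  then have h1: "x1 \<ge> cc n i - e/4" "x1 \<le> cc n i + e/4" "x2 \<ge> 1 - e/4" "x2 \<le> 1 + e/4" by arith+
  show "x \<in> Hext n e"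
  proof (cases "x2 < 1")
    case True
    then have "x \<in> hersch" using h1 c2 assms xx by (auto simp: hersch_def)
    then show ?thesis by (simp add: Hext_def)
  next
    case False
    then have "x \<in> Tube n e i" using h1 assms xx
      by (auto simp: Tube_def Sig_def cc_def[symmetric])
    then show ?thesis using assms by (auto simp: Hext_def)
  qed
qed

lemma sq_sum_disj:
  fixes f :: "nat \<Rightarrow> real"
  assumes "finite A" "\<forall>i\<in>A. \<forall>j\<in>A. i \<noteq> j \<longrightarrow> f i * f j = 0"
  shows "(\<Sum>i\<in>A. f i)^2 = (\<Sum>i\<in>A. (f i)^2)"
proof -
  have "(\<Sum>i\<in>A. f i)^2 = (\<Sum>i\<in>A. \<Sum>j\<in>A. f i * f j)"
    by (simp add: power2_eq_square sum_product)
  also have "\<dots> = (\<Sum>i\<in>A. (f i)^2)"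
  proof (rule sum.cong[OF refl])
    fix i assume i: "i \<in> A"
    have "(\<Sum>j\<in>A. f i * f j) = f i * f i + (\<Sum>j\<in>A - {i}. f i * f j)"
      using sum.remove[OF assms(1) i] by simp
    also have "(\<Sum>j\<in>A - {i}. f i * f j) = 0"
      using assms(2) i by (intro sum.neutral) auto
    finally show "(\<Sum>j\<in>A. f i * f j) = (f i)^2" by (simp add: power2_eq_square)
  qed
  finally show ?thesis .
qed

lemma cont_fst_comp: "continuous_on UNIV f \<Longrightarrow> continuous_on S (\<lambda>x::real\<times>real. f ((fst x - c) / e))"
  by (cases "e = 0"; rule continuous_on_compose2[of UNIV f]) (auto intro!: continuous_intros)

lemma cont_snd_comp: "continuous_on UNIV f \<Longrightarrow> continuous_on S (\<lambda>x::real\<times>real. f ((snd x - c) / e))"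
  by (cases "e = 0"; rule continuous_on_compose2[of UNIV f]) (auto intro!: continuous_intros)

definition T1 :: "(real \<Rightarrow> real) \<Rightarrow> nat \<Rightarrow> real \<Rightarrow> real \<Rightarrow> nat \<Rightarrow> real \<times> real \<Rightarrow> real" where
  "T1 g n e b i x = b * e * g (cc n i) * (hbd ((fst x - cc n i) / e) * (1/e)) * hb ((snd x - 1) / e)"
definition T2 :: "(real \<Rightarrow> real) \<Rightarrow> nat \<Rightarrow> real \<Rightarrow> real \<Rightarrow> nat \<Rightarrow> real \<times> real \<Rightarrow> real" where
  "T2 g n e b i x = b * e * g (cc n i) * hb ((fst x - cc n i) / e) * (hbd ((snd x - 1) / e) * (1/e))"

lemma T_out: "e > 0 \<Longrightarrow> x \<notin> bx n e i \<Longrightarrow> T1 g n e b i x = 0 \<and> T2 g n e b i x = 0"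
  using out_box[of e x n i] hb_zero by (auto simp: T1_def T2_def)

lemma T_disj:
  assumes "n \<ge> 1" "e > 0" "e < 1 / (2 * real n)" "i \<noteq> j"
  shows "T1 g n e b i x * T1 g n e b j x = 0 \<and> T2 g n e b i x * T2 g n e b j x = 0"
proof (cases "x \<in> bx n e i")
  case True
  then have "x \<notin> bx n e j" using box_disj assms by blast
  then show ?thesis using T_out assms by auto
next
  case False
  then show ?thesis using T_out assms by auto
qed

lemma grad_phi:
  assumes "n \<ge> 1" "e > 0" "e < 1 / (2 * real n)"
  shows "grad_sq (phi g n e b) x = (\<Sum>i=0..n. (T1 g n e b i x)^2 + (T2 g n e b i x)^2)"
proof -
  have "dpart False (phi g n e b) x = (\<Sum>i=0..n. T1 g n e b i x)"
    by (simp add: dpart_phi1 T1_def)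
  moreover have "dpart True (phi g n e b) x = (\<Sum>i=0..n. T2 g n e b i x)"
    by (simp add: dpart_phi2 T2_def)
  moreover have "(\<Sum>i=0..n. T1 g n e b i x)^2 = (\<Sum>i=0..n. (T1 g n e b i x)^2)"
    using T_disj[OF assms] by (intro sq_sum_disj) auto
  moreover have "(\<Sum>i=0..n. T2 g n e b i x)^2 = (\<Sum>i=0..n. (T2 g n e b i x)^2)"
    using T_disj[OF assms] by (intro sq_sum_disj) auto
  ultimately show ?thesis by (simp add: grad_sq_def sum.distrib)
qed

lemma sq_le_M: "\<bar>y::real\<bar> \<le> M \<Longrightarrow> y^2 \<le> M^2"
proof -
  assume "\<bar>y\<bar> \<le> M"
  then have "\<bar>y\<bar>^2 \<le> M^2" by (rule power_mono) simp
  then show ?thesis by simp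
qed

lemma T_bound:
  assumes M: "\<forall>t. \<bar>hb t\<bar> \<le> M \<and> \<bar>hbd t\<bar> \<le> M" and e: "e > 0"
  shows "(T1 g n e b i x)^2 + (T2 g n e b i x)^2 \<le> 2 * ((b * e * g (cc n i))^2 * M^4 / e^2)"
proof -
  define a where "a = b * e * g (cc n i)"
  define u where "u = hb ((fst x - cc n i) / e)"
  define v where "v = hb ((snd x - 1) / e)"
  define u' where "u' = hbd ((fst x - cc n i) / e)"
  define v' where "v' = hbd ((snd x - 1) / e)"
  have b: "u^2 \<le> M^2" "v^2 \<le> M^2" "u'^2 \<le> M^2" "v'^2 \<le> M^2"
    unfolding u_def v_def u'_def v'_def using M sq_le_M by blast+
  have "(T1 g n e b i x)^2 = a^2 * (u'^2 * v^2) / e^2"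
    by (simp add: T1_def a_def u'_def v_def power_mult_distrib power_divide)
  also have "\<dots> \<le> a^2 * (M^2 * M^2) / e^2"
    using b e by (intro divide_right_mono mult_left_mono mult_mono) auto
  finally have 1: "(T1 g n e b i x)^2 \<le> a^2 * M^4 / e^2" by (simp add: power4_eq_xxxx power2_eq_square mult_ac)
  have "(T2 g n e b i x)^2 = a^2 * (u^2 * v'^2) / e^2"
    by (simp add: T2_def a_def u_def v'_def power_mult_distrib power_divide)
  also have "\<dots> \<le> a^2 * (M^2 * M^2) / e^2"
    using b e by (intro divide_right_mono mult_left_mono mult_mono) auto
  finally have 2: "(T2 g n e b i x)^2 \<le> a^2 * M^4 / e^2" by (simp add: power4_eq_xxxx power2_eq_square mult_ac)
  show ?thesis using 1 2 by (simp add: a_def)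
qed

lemma has_integral_box_U:
  fixes f :: "real \<times> real \<Rightarrow> real"
  assumes "cbox a b \<subseteq> U" "continuous_on (cbox a b) f" "\<And>x. x \<notin> cbox a b \<Longrightarrow> f x = 0"
  shows "(f has_integral integral (cbox a b) f) U"
proof -
  have "(f has_integral integral (cbox a b) f) (cbox a b)"
    using integrable_continuous[OF assms(2)] by (rule integrable_integral)
  then have "((\<lambda>x. if x \<in> cbox a b then f x else 0) has_integral integral (cbox a b) f) UNIV"
    by (simp only: has_integral_restrict_UNIV)
  moreover have "(\<lambda>x. if x \<in> cbox a b then f x else 0) = (\<lambda>x. if x \<in> U then f x else 0)"
    using assms(1,3) by (auto simp: fun_eq_iff)
  ultimately show ?thesis by (simp only: has_integral_restrict_UNIV)
qed

lemma content_bx: "e > 0 \<Longrightarrow> Henstock_Kurzweil_Integration.content (bx n e i) = (e/2) * (e/2)"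
  by (simp add: bx_def content_Pair)

lemma grad_int_bound:
  assumes n: "n \<ge> 1" "e > 0" "e < 1 / (2 * real n)" "e < 1"
    and M: "\<forall>t. \<bar>hb t\<bar> \<le> M \<and> \<bar>hbd t\<bar> \<le> M"
  shows "integral (Hext n e) (grad_sq (phi g n e b)) \<le> (\<Sum>i=0..n. (b * e * g (cc n i))^2 * M^4 / 2)"
proof -
  define S where "S i x = (T1 g n e b i x)^2 + (T2 g n e b i x)^2" for i x
  have cS: "continuous_on A (S i)" for A i
    unfolding S_def[abs_def] T1_def T2_def
    by (intro continuous_intros cont_fst_comp cont_snd_comp hb_cont hbd_cont)
  have hi: "(S i has_integral integral (bx n e i) (S i)) (Hext n e)" if "i \<in> {0..n}" for i
    using has_integral_box_U[of "(cc n i - e/4, 1 - e/4)" "(cc n i + e/4, 1 + e/4)" "Hext n e" "S i"]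
      box_sub[of e i n] that n cS T_out[of e _ n i g b]
    by (auto simp: bx_def S_def)
  have "((\<lambda>x. \<Sum>i=0..n. S i x) has_integral (\<Sum>i=0..n. integral (bx n e i) (S i))) (Hext n e)"
    by (intro has_integral_sum hi) auto
  moreover have "(\<lambda>x. \<Sum>i=0..n. S i x) = grad_sq (phi g n e b)"
    using grad_phi[OF n(1-3)] by (auto simp: fun_eq_iff S_def)
  ultimately have eq: "integral (Hext n e) (grad_sq (phi g n e b)) = (\<Sum>i=0..n. integral (bx n e i) (S i))"
    by (simp add: integral_unique)
  have le: "integral (bx n e i) (S i) \<le> (b * e * g (cc n i))^2 * M^4 / 2" for i
  proof -
    have "integral (bx n e i) (S i) \<le> integral (bx n e i) (\<lambda>_. 2 * ((b * e * g (cc n i))^2 * M^4 / e^2))"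
    proof (unfold bx_def, rule integral_le)
      show "\<And>x. S i x \<le> 2 * ((b * e * g (cc n i))^2 * M^4 / e^2)"
        unfolding S_def by (rule T_bound[OF M n(2)])
    qed (auto intro: integrable_continuous cS)
    also have "\<dots> = (e/2) * (e/2) * (2 * ((b * e * g (cc n i))^2 * M^4 / e^2))"
      using content_bx[OF n(2), of n i] by (simp only: bx_def integral_const real_scaleR_def)
    also have "\<dots> = (b * e * g (cc n i))^2 * M^4 / 2"
      using n(2) by (simp add: field_simps power2_eq_square)
    finally show ?thesis .
  qed
  show ?thesis unfolding eq by (intro sum_mono le)
qed

lemma Sig_cc: "Sig n e i = {cc n i - e <..< cc n i + e}"
  by (simp add: Sig_def cc_def)

lemma phi_on_Sig:
  assumes n: "n \<ge> 1" "e > 0" "e < 1 / (2 * real n)" "i \<le> n" and t: "t \<in> Sig n e i"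
  shows "phi g n e b (t, 1) = b * e * g (cc n i) * hb ((t - cc n i) / e) * exp (-8)"
proof -
  have tc: "\<bar>t - cc n i\<bar> < e" using t by (auto simp: Sig_cc abs_less_iff)
  have z: "b * e * g (cc n j) * hb ((t - cc n j) / e) * hb ((1 - 1) / e) = 0" if "j \<in> {0..n} - {i}" for j
  proof -
    have "\<bar>cc n i - cc n j\<bar> \<ge> 1 / real n" using cc_sep n that by auto
    moreover have "e + e/4 < 1 / real n" using n by (simp add: field_simps)
    ultimately have "\<bar>t - cc n j\<bar> \<ge> e/4" using tc by linarith
    then have "\<bar>(t - cc n j) / e\<bar> \<ge> 1/4" using n by (simp add: abs_divide le_divide_eq)
    then show ?thesis using hb_zero by simp
  qed
  have "phi g n e b (t, 1) = b * e * g (cc n i) * hb ((t - cc n i) / e) * hb ((1 - 1) / e) +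
      (\<Sum>j\<in>{0..n} - {i}. b * e * g (cc n j) * hb ((t - cc n j) / e) * hb ((1 - 1) / e))"
    unfolding phi_def fst_conv snd_conv using n(4) by (subst sum.remove[of _ i]) auto
  also have "(\<Sum>j\<in>{0..n} - {i}. b * e * g (cc n j) * hb ((t - cc n j) / e) * hb ((1 - 1) / e)) = 0"
    using z by (intro sum.neutral) blast
  finally show ?thesis by (simp add: hb0)
qed

lemma bdry_bound:
  assumes n: "n \<ge> 1" "e > 0" "e < 1 / (2 * real n)" "e < 1" "i \<le> n" and b: "b \<ge> 0"
    and gc: "continuous_on {0<..} g"
    and cond: "\<forall>t. \<bar>t - cc n i\<bar> \<le> e \<longrightarrow> g (cc n i) * g t \<ge> (g (cc n i))^2 / 2"
  shows "integral (Sig n e i) (\<lambda>t. g t * phi g n e b (t, 1)) \<ge> b * exp (-8) * exp (-16) * e^2 * (g (cc n i))^2 / 8"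
proof -
  define c where "c = cc n i"
  define K where "K = b * e * exp (-8) * ((g c)^2 / 2) * exp (-16)"
  define f where "f t = b * e * exp (-8) * (g c * g t) * hb ((t - c) / e)" for t
  define l where "l t = (if t \<in> {c - e/8..c + e/8} then K else 0)" for t
  have c2: "c \<ge> 2" by (simp add: c_def cc_def)
  have eqf: "integral (Sig n e i) (\<lambda>t. g t * phi g n e b (t, 1)) = integral (Sig n e i) f"
    by (rule integral_cong) (simp add: phi_on_Sig[OF n(1-3,5)] f_def c_def mult_ac)
  have "continuous_on {c - e..c + e} f"
    unfolding f_def
  proof (intro continuous_intros)
    show "continuous_on {c - e..c + e} g"
      using c2 n(4) by (rule_tac continuous_on_subset[OF gc]) auto
    show "continuous_on {c - e..c + e} (\<lambda>t. hb ((t - c) / e))"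
      by (rule continuous_on_compose2[OF hb_cont[of UNIV]]) (use n(2) in \<open>auto intro!: continuous_intros\<close>)
  qed
  then have fi: "f integrable_on Sig n e i"
    unfolding Sig_cc c_def[symmetric] by (simp add: integrable_on_open_interval_real integrable_continuous_real)
  have "((\<lambda>_. K) has_integral (e/4) * K) ({c - e/8..c + e/8} \<inter> Sig n e i)"
  proof -
    have "{c - e/8..c + e/8} \<inter> Sig n e i = {c - e/8..c + e/8}"
      using n(2) by (auto simp: Sig_cc c_def[symmetric])
    moreover have "((\<lambda>_. K) has_integral (e/4) * K) {c - e/8..c + e/8}"
      using has_integral_const_real[of K "c - e/8" "c + e/8"] n(2) by simp
    ultimately show ?thesis by simp
  qed
  then have li: "(l has_integral (e/4) * K) (Sig n e i)"
    unfolding l_def[abs_def] by (simp only: has_integral_restrict_Int)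
  have le: "l t \<le> f t" if "t \<in> Sig n e i" for t
  proof -
    have "\<bar>t - c\<bar> \<le> e" using that by (auto simp: Sig_cc c_def[symmetric] abs_le_iff)
    then have gg: "g c * g t \<ge> (g c)^2 / 2" using cond by (simp add: c_def)
    have nn: "0 \<le> b * e * exp (-8)" using b n(2) by simp
    have "0 \<le> (g c)^2 / 2" by simp
    then have gg0: "0 \<le> g c * g t" using gg by linarith
    show ?thesis
    proof (cases "t \<in> {c - e/8..c + e/8}")
      case True
      then have "c - e/8 \<le> t" "t \<le> c + e/8" by auto
      then have "\<bar>t - c\<bar> \<le> e/8" by (subst abs_le_iff) linarith
      then have "\<bar>(t - c) / e\<bar> \<le> 1/8" using n(2) by (simp add: abs_divide divide_le_eq)
      then have "hb ((t - c) / e) \<ge> exp (-16)" by (rule hb_lower)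
      then have "((g c)^2 / 2) * exp (-16) \<le> (g c * g t) * hb ((t - c) / e)"
        using gg gg0 by (intro mult_mono) auto
      then have "b * e * exp (-8) * (((g c)^2 / 2) * exp (-16)) \<le> b * e * exp (-8) * ((g c * g t) * hb ((t - c) / e))"
        using nn by (rule mult_left_mono)
      then show ?thesis using True by (simp add: l_def f_def K_def mult_ac)
    next
      case False
      from gg0 have "0 \<le> b * e * exp (-8) * (g c * g t) * hb ((t - c) / e)"
        using nn hb_nonneg by simp
      then show ?thesis using False unfolding l_def f_def by auto
    qed
  qed
  have "(e/4) * K \<le> integral (Sig n e i) f"
    using has_integral_le[OF li integrable_integral[OF fi] le] .
  moreover have "(e/4) * K = b * exp (-8) * exp (-16) * e^2 * (g (cc n i))^2 / 8"
    by (simp add: K_def c_def power2_eq_square field_simps)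
  ultimately show ?thesis using eqf by (simp only:)
qed

lemma phi_test:
  assumes n: "n \<ge> 1" "e > 0" "e < 1 / (2 * real n)" "e < 1"
  shows "test_fn (Hext n e) (phi g n e b)"
proof -
  define U where "U = (\<Union>i\<in>{0..n}. bx n e i)"
  have sub: "{x. phi g n e b x \<noteq> 0} \<subseteq> U"
  proof
    fix x assume x: "x \<in> {x. phi g n e b x \<noteq> 0}"
    show "x \<in> U"
    proof (rule ccontr)
      assume "x \<notin> U"
      then have "\<forall>i\<in>{0..n}. x \<notin> bx n e i" by (auto simp: U_def)
      then have "\<forall>i\<in>{0..n}. b * e * g (cc n i) * hb ((fst x - cc n i) / e) * hb ((snd x - 1) / e) = 0"
        using out_box[OF n(2)] hb_zero by fastforce
      then have "phi g n e b x = 0" unfolding phi_def by (intro sum.neutral) blast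
      then show False using x by simp
    qed
  qed
  have cU: "closed U" "compact U" unfolding U_def bx_def by (auto intro!: closed_UN compact_UN)
  have cl: "closure {x. phi g n e b x \<noteq> 0} \<subseteq> U"
    using closure_minimal[OF sub cU(1)] .
  have "compact (U \<inter> closure {x. phi g n e b x \<noteq> 0})"
    using cU by (intro compact_Int_closed) auto
  moreover have "U \<inter> closure {x. phi g n e b x \<noteq> 0} = closure {x. phi g n e b x \<noteq> 0}"
    using cl by blast
  ultimately have "compact (closure {x. phi g n e b x \<noteq> 0})" by simp
  moreover have "U \<subseteq> Hext n e" unfolding U_def by (intro UN_least box_sub[OF n(2,4)]) auto
  ultimately show ?thesis unfolding test_fn_def using smooth_Q[OF phi_Q] cl by auto
qed

lemma cond_eventually:
  fixes g :: "real \<Rightarrow> real" and c :: real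
  assumes gc: "continuous_on {0<..} g" and c: "c \<ge> 2"
  shows "\<forall>\<^sub>F e in at_right 0. \<forall>t. \<bar>t - c\<bar> \<le> e \<longrightarrow> g c * g t \<ge> (g c)^2 / 2"
proof (cases "g c = 0")
  case True
  then show ?thesis by simp
next
  case False
  then have pos: "\<bar>g c\<bar> / 2 > 0" by simp
  have "c \<in> {0<..}" using c by simp
  then obtain d where d: "d > 0" "\<forall>x'\<in>{0<..}. dist x' c < d \<longrightarrow> dist (g x') (g c) < \<bar>g c\<bar> / 2"
    using gc pos unfolding continuous_on_iff by blast
  show ?thesis
    unfolding eventually_at_right_field
  proof (intro exI[of _ "min d 1"] conjI allI impI)
    fix e t :: real
    assume e: "0 < e" "e < min d 1" and t: "\<bar>t - c\<bar> \<le> e"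
    have "t > 0" using t e c by linarith
    moreover have "dist t c < d" using t e by (simp add: dist_real_def)
    ultimately have h: "\<bar>g t - g c\<bar> < \<bar>g c\<bar> / 2" using d by (auto simp: dist_real_def)
    have "\<bar>g c * (g t - g c)\<bar> \<le> \<bar>g c\<bar> * (\<bar>g c\<bar> / 2)"
      unfolding abs_mult using h by (intro mult_left_mono) auto
    then have "g c * (g t - g c) \<ge> - ((g c)^2 / 2)"
      by (simp add: power2_eq_square abs_mult_self)
    then show "g c * g t \<ge> (g c)^2 / 2"
      by (simp add: algebra_simps power2_eq_square)
  qed (use d in simp)
qed

theorem mainTheorem10:
  fixes u w1 w2 d2u :: "real \<times> real \<Rightarrow> real" and du :: "real \<Rightarrow> real"
  assumes efun: "first_dirichlet_efun hersch u w1 w2"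
    and pd: "\<forall>p\<in>hersch. ((\<lambda>y. u (fst p, y)) has_real_derivative d2u p) (at (snd p))"
    and tr: "\<forall>t>0. ((\<lambda>s. d2u (t, s)) \<longlongrightarrow> du t) (at_left 1)"
    and trcont: "continuous_on {0<..} du"
  shows "\<exists>\<alpha>>0. \<forall>n\<ge>1. \<exists>r :: real \<Rightarrow> real.
           ((\<lambda>\<epsilon>. r \<epsilon> / \<epsilon>\<^sup>2) \<longlongrightarrow> 0) (at_right 0) \<and>
           (\<forall>\<^sub>F \<epsilon> in at_right 0.
              ereal (\<alpha> * \<epsilon>\<^sup>2 * (\<Sum>i=0..n. (du (2 + real i / real n))\<^sup>2) + r \<epsilon>) \<le> Tfun du n \<epsilon>)"
proof -
  obtain M where M: "M > 0" "\<forall>t. \<bar>hb t\<bar> \<le> M \<and> \<bar>hbd t\<bar> \<le> M" using hb_bound by blast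
  define E where "E = exp (-8) * exp (-16::real)"
  define \<beta> where "\<beta> = E / (4 * M^4)"
  define \<alpha> where "\<alpha> = E^2 / (32 * M^4)"
  have Epos: "E > 0" by (simp add: E_def)
  have bpos: "\<beta> \<ge> 0" using Epos M(1) by (simp add: \<beta>_def)
  have apos: "\<alpha> > 0" using Epos M(1) by (simp add: \<alpha>_def)
  have key: "2 * (\<beta> * exp (-8) * exp (-16) * e^2 * d^2 / 8) - (\<beta> * e * d)^2 * M^4 / 2 = \<alpha> * e^2 * d^2"
    for d e :: real
  proof -
    have "2 * (\<beta> * exp (-8) * exp (-16) * e^2 * d^2 / 8) - (\<beta> * e * d)^2 * M^4 / 2
        = (\<beta> * E / 4 - \<beta>^2 * M^4 / 2) * (e^2 * d^2)"
      by (simp add: E_def power_mult_distrib algebra_simps)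
    also have "\<beta> * E / 4 - \<beta>^2 * M^4 / 2 = \<alpha>"
      using M(1) by (simp add: \<alpha>_def \<beta>_def power2_eq_square field_simps)
    finally show ?thesis by (simp add: mult_ac)
  qed
  show ?thesis
  proof (intro exI[of _ \<alpha>] conjI allI impI)
    show "\<alpha> > 0" by (rule apos)
    fix n :: nat assume n: "n \<ge> 1"
    show "\<exists>r :: real \<Rightarrow> real. ((\<lambda>\<epsilon>. r \<epsilon> / \<epsilon>\<^sup>2) \<longlongrightarrow> 0) (at_right 0) \<and>
           (\<forall>\<^sub>F \<epsilon> in at_right 0.
              ereal (\<alpha> * \<epsilon>\<^sup>2 * (\<Sum>i=0..n. (du (2 + real i / real n))\<^sup>2) + r \<epsilon>) \<le> Tfun du n \<epsilon>)"
    proof (intro exI[of _ "\<lambda>_. 0"] conjI)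
      show "((\<lambda>\<epsilon>::real. 0 / \<epsilon>\<^sup>2) \<longlongrightarrow> 0) (at_right 0)" by simp
      have pn: "1 / (2 * real n) > 0" using n by simp
      have pn2: "1 / (2 * real n) < 1" using n by (simp add: field_simps)
      have ev1: "\<forall>\<^sub>F e in at_right 0. 0 < e \<and> e < 1 / (2 * real n) \<and> e < 1"
        unfolding eventually_at_right_field
        using pn pn2 by (intro exI[of _ "1 / (2 * real n)"]) (smt (verit))
      have ev2: "\<forall>\<^sub>F e in at_right 0. \<forall>i\<in>{0..n}. \<forall>t. \<bar>t - cc n i\<bar> \<le> e \<longrightarrow> du (cc n i) * du t \<ge> (du (cc n i))^2 / 2"
      proof (rule eventually_ball_finite)
        show "finite {0..n}" by simp
        show "\<forall>i\<in>{0..n}. \<forall>\<^sub>F e in at_right 0. \<forall>t. \<bar>t - cc n i\<bar> \<le> e \<longrightarrow> du (cc n i) * du t \<ge> (du (cc n i))^2 / 2"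
          by (intro ballI cond_eventually trcont) (simp add: cc_def)
      qed
      show "\<forall>\<^sub>F \<epsilon> in at_right 0.
              ereal (\<alpha> * \<epsilon>\<^sup>2 * (\<Sum>i=0..n. (du (2 + real i / real n))\<^sup>2) + 0) \<le> Tfun du n \<epsilon>"
        using ev1 ev2
      proof eventually_elim
        case (elim e)
        then have e: "0 < e" "e < 1 / (2 * real n)" "e < 1" by auto
        define \<phi> where "\<phi> = phi du n e \<beta>"
        have tf: "test_fn (Hext n e) \<phi>" unfolding \<phi>_def using phi_test[OF n e] .
        have T: "ereal (2 * (\<Sum>i=0..n. integral (Sig n e i) (\<lambda>t. du t * \<phi> (t, 1))) - integral (Hext n e) (grad_sq \<phi>))
                 \<le> Tfun du n e"
          unfolding Tfun_def by (rule SUP_upper) (simp add: tf)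
        have B: "\<beta> * exp (-8) * exp (-16) * e^2 * (du (cc n i))^2 / 8 \<le> integral (Sig n e i) (\<lambda>t. du t * \<phi> (t, 1))"
          if "i \<in> {0..n}" for i
          unfolding \<phi>_def using elim that
          by (intro bdry_bound[OF n e(1,2,3) _ bpos trcont]) auto
        have G: "integral (Hext n e) (grad_sq \<phi>) \<le> (\<Sum>i=0..n. (\<beta> * e * du (cc n i))^2 * M^4 / 2)"
          unfolding \<phi>_def by (rule grad_int_bound[OF n e M(2)])
        have "\<alpha> * e\<^sup>2 * (\<Sum>i=0..n. (du (cc n i))\<^sup>2) = (\<Sum>i=0..n. \<alpha> * e\<^sup>2 * (du (cc n i))\<^sup>2)"
          by (simp add: sum_distrib_left)
        also have "\<dots> = (\<Sum>i=0..n. 2 * (\<beta> * exp (-8) * exp (-16) * e^2 * (du (cc n i))^2 / 8) - (\<beta> * e * du (cc n i))^2 * M^4 / 2)"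
          by (rule sum.cong[OF refl]) (rule key[symmetric])
        also have "\<dots> = 2 * (\<Sum>i=0..n. \<beta> * exp (-8) * exp (-16) * e^2 * (du (cc n i))^2 / 8)
                        - (\<Sum>i=0..n. (\<beta> * e * du (cc n i))^2 * M^4 / 2)"
          by (simp add: sum_subtractf sum_distrib_left)
        also have "\<dots> \<le> 2 * (\<Sum>i=0..n. integral (Sig n e i) (\<lambda>t. du t * \<phi> (t, 1))) - integral (Hext n e) (grad_sq \<phi>)"
        proof -
          have "(\<Sum>i=0..n. \<beta> * exp (-8) * exp (-16) * e^2 * (du (cc n i))^2 / 8)
              \<le> (\<Sum>i=0..n. integral (Sig n e i) (\<lambda>t. du t * \<phi> (t, 1)))"
            by (rule sum_mono) (rule B)
          then show ?thesis using G by linarith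
        qed
        finally have "\<alpha> * e\<^sup>2 * (\<Sum>i=0..n. (du (cc n i))\<^sup>2) + 0
            \<le> 2 * (\<Sum>i=0..n. integral (Sig n e i) (\<lambda>t. du t * \<phi> (t, 1))) - integral (Hext n e) (grad_sq \<phi>)"
          by simp
        then have "ereal (\<alpha> * e\<^sup>2 * (\<Sum>i=0..n. (du (cc n i))\<^sup>2) + 0) \<le> Tfun du n e"
          using T by (meson ereal_less_eq(3) order_trans)
        then show ?case by (simp add: cc_def)
      qed
    qed
  qed
qed

end
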